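(* Let $f\in\mathbf C\{x\}[y]$ be a reduced distinguished polynomial of degree $n\ge2$, written $f=\prod_{i=1}^n(y-a_i)$ with $\sum_ia_i=0$. Then for every $w\in\mathcal E\cap\mathcal O$, $$\mathrm{val}(w)\ge n\delta\rho(w)-\sup\{m_i:1\le i\le n\}.$$ In particular $\mathcal E\cap\mathcal O_q\subset\mathcal E_0$ as soon as $q\ge\sup_i m_i/(n\delta)$.
   Context: Distinguished: monic in $y$ with $f(0,y)=y^n$; the $a_i$ are pairwise distinct Puiseux series in $\overline K=\bigcup_{e\ge1}\mathbf C[[x^{1/e}]][1/x]$ with valuation $\nu$. $m_{i,j}=\nu(a_i-a_j)$, $m_i=\sum_{j\ne i}m_{i,j}$, $\delta=\inf_i\nu(a_i)$ ($>0$). $\mathcal O=\mathbf C\{x,y\}$. $\varepsilon_i=\prod_{j\ne i}(y-a_j)$; for $w=\sum w_i\varepsilon_i$ of degree $<n$, $\mathrm{val}(w)=\inf\nu(w_i)$. $\mathcal E$ is the $\mathbf C((x))$-space of polynomials in $y$ of degree $<n$, $\mathcal E_0=\{w\in\mathcal E:\mathrm{val}(w)\ge0\}$. For $w=\sum w_{k,l}x^ky^l\in\mathcal O$ nonzero, $\rho(w)=\inf\{k/(n\delta)+l/n:w_{k,l}\ne0\}$, and $\mathcal O_q=\{w\in\mathcal O:\rho(w)\ge q\}$ (with $\rho(0)=+\infty$). *)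

theory Defs
  imports "HOL-Analysis.FPS_Convergence"
          "HOL-Computational_Algebra.Formal_Laurent_Series"
          "HOL-Computational_Algebra.Polynomial"
begin

text \<open>Puiseux series with common ramification index e are modelled as formal Laurent
  series in t = x^(1/e).  pull e maps a power series c(x) to c(t^e).\<close>

definition pull :: "nat \<Rightarrow> complex fps \<Rightarrow> complex fls" where
  "pull e c = fps_to_fls (Abs_fps (\<lambda>j. if e dvd j then c $ (j div e) else 0))"

definition nu :: "nat \<Rightarrow> complex fls \<Rightarrow> ereal" where
  "nu e b = (if b = 0 then \<infinity> else ereal (real_of_int (fls_subdegree b) / real e))"

definition eps :: "nat \<Rightarrow> (nat \<Rightarrow> complex fls) \<Rightarrow> nat \<Rightarrow> complex fls poly" where
  "eps n a i = (\<Prod>j\<in>{..<n} - {i}. [:- a j, 1:])"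

definition mm :: "nat \<Rightarrow> nat \<Rightarrow> (nat \<Rightarrow> complex fls) \<Rightarrow> nat \<Rightarrow> ereal" where
  "mm e n a i = (\<Sum>j\<in>{..<n} - {i}. nu e (a i - a j))"

definition delta :: "nat \<Rightarrow> nat \<Rightarrow> (nat \<Rightarrow> complex fls) \<Rightarrow> ereal" where
  "delta e n a = Min ((\<lambda>i. nu e (a i)) ` {..<n})"

text \<open>val(w) = inf nu(w_i), where w = sum w_i eps_i (decomposition in Kbar[y]).\<close>
definition val_E :: "nat \<Rightarrow> nat \<Rightarrow> (nat \<Rightarrow> complex fls) \<Rightarrow> complex fps poly \<Rightarrow> ereal" where
  "val_E e n a w =
     (let c = (THE c. (\<forall>i. n \<le> i \<longrightarrow> c i = 0) \<and>
                 map_poly (pull e) w = (\<Sum>i<n. smult (c i) (eps n a i)))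
      in Min ((\<lambda>i. nu e (c i)) ` {..<n}))"

definition rho :: "nat \<Rightarrow> real \<Rightarrow> complex fps poly \<Rightarrow> ereal" where
  "rho n d w = Inf {ereal (real k / (real n * d) + real l / real n) | k l. coeff w l $ k \<noteq> 0}"

definition conv_fps :: "complex fps \<Rightarrow> bool" where
  "conv_fps c \<longleftrightarrow> fps_conv_radius c > 0"

end

theory Submission imports Defs begin
unbundle fps_syntax

definition low :: "int \<Rightarrow> complex fls \<Rightarrow> bool" where
  "low N f \<longleftrightarrow> (\<forall>k<N. f $$ k = 0)"

lemma low_sum: "(\<And>x. x \<in> A \<Longrightarrow> low N (g x)) \<Longrightarrow> low N (\<Sum>x\<in>A. g x)"
  unfolding low_def by (simp add: fls_nth_sum)

lemma low_subdeg: "f = 0 \<or> N \<le> fls_subdegree f \<Longrightarrow> low N f"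
  unfolding low_def by auto

lemma low_subdeg_ge: "low N f \<Longrightarrow> f \<noteq> 0 \<Longrightarrow> N \<le> fls_subdegree f"
  unfolding low_def by (auto intro: fls_subdegree_geI)

lemma pull_nth: "pull e c $$ m = (if m < 0 then 0 else if e dvd nat m then c $ (nat m div e) else 0)"
  unfolding pull_def by simp

lemma pull_0 [simp]: "pull e 0 = 0"
  by (rule fls_eqI) (simp add: pull_nth)

lemma pull_1 [simp]: "e > 0 \<Longrightarrow> pull e 1 = 1"
  by (rule fls_eqI) (auto simp: pull_nth)

lemma pull_subdeg:
  assumes "e > 0" "c \<noteq> 0"
  shows "fls_subdegree (pull e c) = int e * int (subdegree c)"
proof (rule fls_subdegree_eqI)
  show "pull e c $$ (int e * int (subdegree c)) \<noteq> 0"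
    using assms by (simp add: pull_nth nat_mult_distrib not_less)
  fix k assume k: "k < int e * int (subdegree c)"
  show "pull e c $$ k = 0"
  proof (cases "k < 0 \<or> \<not> e dvd nat k")
    case True then show ?thesis by (auto simp: pull_nth)
  next
    case False
    then obtain m where m: "nat k = e * m" and k0: "k \<ge> 0" by auto
    have "k = int (e*m)" using m k0 by (metis nat_0_le)
    then have "int (e*m) < int e * int (subdegree c)" using k by simp
    then have "e*m < e * subdegree c" by (simp only: of_nat_mult[symmetric] of_nat_less_iff)
    then have "m < subdegree c" using assms(1) by simp
    have "nat k div e = m" using m assms(1) by simp
    then have "pull e c $$ k = c $ m" using False unfolding pull_nth by simp
    then show ?thesis using \<open>m < subdegree c\<close> nth_less_subdegree_zero[of m c] by argo
  qed
qed

lemma pull_eq0: "e > 0 \<Longrightarrow> pull e c = 0 \<longleftrightarrow> c = 0"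
proof
  assume "e > 0" "pull e c = 0"
  show "c = 0"
  proof (rule ccontr)
    assume "c \<noteq> 0"
    then have "pull e c $$ (int e * int (subdegree c)) \<noteq> 0"
      using \<open>e > 0\<close> by (simp add: pull_nth nat_mult_distrib not_less)
    then show False using \<open>pull e c = 0\<close> by (metis fls_zero_nth)
  qed
qed (simp only: pull_0)

lemma poly_sum_le:
  fixes p :: "'a::comm_semiring_1 poly"
  assumes "degree p \<le> N"
  shows "poly p x = (\<Sum>k\<le>N. coeff p k * x ^ k)"
proof -
  have "poly p x = poly (\<Sum>i\<le>N. monom (coeff p i) i) x"
    using poly_as_sum_of_monoms'[OF assms] by simp
  also have "\<dots> = (\<Sum>k\<le>N. coeff p k * x ^ k)"
    by (simp add: poly_sum poly_monom)
  finally show ?thesis .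
qed

lemma root_pos:
  fixes F :: "complex fls poly"
  assumes deg: "degree F \<le> n" and cn: "coeff F n = 1" and lowc: "\<forall>k<n. low 1 (coeff F k)"
    and root: "poly F a = 0" and anz: "a \<noteq> 0"
  shows "fls_subdegree a > 0"
proof (rule ccontr)
  assume "\<not> fls_subdegree a > 0"
  then have s: "fls_subdegree a \<le> 0" by simp
  define s where "s = fls_subdegree a"
  have "poly F a = (\<Sum>k\<le>n. coeff F k * a ^ k)" by (rule poly_sum_le[OF deg])
  also have "\<dots> = (\<Sum>k<n. coeff F k * a ^ k) + a ^ n"
    using cn by (simp add: lessThan_Suc_atMost[symmetric])
  finally have eq: "poly F a = (\<Sum>k<n. coeff F k * a ^ k) + a ^ n" .
  have "low (int n * s + 1) (\<Sum>k<n. coeff F k * a ^ k)"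
  proof (rule low_sum, rule low_subdeg)
    fix k assume k: "k \<in> {..<n}"
    show "coeff F k * a ^ k = 0 \<or> int n * s + 1 \<le> fls_subdegree (coeff F k * a ^ k)"
    proof (cases "coeff F k = 0")
      case False
      have c1: "1 \<le> fls_subdegree (coeff F k)"
        using low_subdeg_ge[OF _ False] lowc k by auto
      have "a ^ k \<noteq> 0" using anz by simp
      then have "fls_subdegree (coeff F k * a ^ k) = fls_subdegree (coeff F k) + int k * s"
        using False by (simp add: fls_subdegree_pow s_def)
      moreover have "int n * s \<le> int k * s" using k s unfolding s_def
        by (intro mult_right_mono_neg) auto
      ultimately show ?thesis using c1 by simp
    qed simp
  qed
  then have "(\<Sum>k<n. coeff F k * a ^ k) $$ (int n * s) = 0" unfolding low_def by simp
  moreover have "(a ^ n) $$ (int n * s) \<noteq> 0"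
  proof -
    have "a ^ n \<noteq> 0" using anz by simp
    moreover have "fls_subdegree (a ^ n) = int n * s" by (simp add: fls_subdegree_pow s_def)
    ultimately show ?thesis using nth_fls_subdegree_nonzero by metis
  qed
  ultimately have "poly F a $$ (int n * s) \<noteq> 0" using eq by simp
  then show False using root by simp
qed

lemma eps_eval: "poly (eps n a i) x = (\<Prod>j\<in>{..<n} - {i}. x - a j)"
  unfolding eps_def by (simp add: poly_prod)

lemma eps_deg: assumes "i < n" shows "degree (eps n a i) \<le> n - 1"
proof -
  have "degree (eps n a i) \<le> (\<Sum>j\<in>{..<n} - {i}. degree [:- a j, 1:])"
    unfolding eps_def using degree_prod_sum_le[of "{..<n} - {i}" "\<lambda>j. [:- a j, 1:]"] by (simp add: o_def)
  also have "\<dots> = card ({..<n} - {i})" by simp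
  also have "\<dots> \<le> n - 1"
    using assms by (simp add: card_Diff_singleton)
  finally show ?thesis .
qed

lemma eps_other: "i < n \<Longrightarrow> j < n \<Longrightarrow> j \<noteq> i \<Longrightarrow> poly (eps n a i) (a j) = 0"
  unfolding eps_eval by (rule prod_zero) auto

lemma eps_self: "inj_on a {..<n} \<Longrightarrow> i < n \<Longrightarrow> poly (eps n a i) (a i) \<noteq> 0"
  unfolding eps_eval by (auto simp: inj_on_def)

lemma eps_sum_eval:
  assumes "j < n"
  shows "poly (\<Sum>i<n. smult (c i) (eps n a i)) (a j) = c j * poly (eps n a j) (a j)"
proof -
  have "poly (\<Sum>i<n. smult (c i) (eps n a i)) (a j) = (\<Sum>i<n. c i * poly (eps n a i) (a j))"
    by (simp add: poly_sum)
  also have "\<dots> = c j * poly (eps n a j) (a j)"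
    using assms by (subst sum.remove[of _ j]) (auto intro!: sum.neutral simp: eps_other)
  finally show ?thesis .
qed

lemma interp:
  fixes W :: "complex fls poly"
  assumes inj: "inj_on a {..<n}" and degW: "degree W < n"
  shows "(THE c. (\<forall>i. n \<le> i \<longrightarrow> c i = 0) \<and> W = (\<Sum>i<n. smult (c i) (eps n a i)))
     = (\<lambda>j. if j < n then poly W (a j) / poly (eps n a j) (a j) else 0)"
    (is "(THE c. ?P c) = ?cc")
proof (rule the_equality)
  have n0: "n > 0" using degW by simp
  show "?P ?cc"
  proof (intro conjI allI impI)
    show "W = (\<Sum>i<n. smult (?cc i) (eps n a i))"
    proof (rule poly_eqI_degree[where A = "a ` {..<n}"])
      fix x assume "x \<in> a ` {..<n}"
      then obtain j where j: "j < n" "x = a j" by auto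
      have "poly (\<Sum>i<n. smult (?cc i) (eps n a i)) (a j) = ?cc j * poly (eps n a j) (a j)"
        by (rule eps_sum_eval[OF j(1)])
      then show "poly W x = poly (\<Sum>i<n. smult (?cc i) (eps n a i)) x"
        using j eps_self[OF inj j(1)] by simp
    next
      have card: "card (a ` {..<n}) = n" using inj by (simp add: card_image)
      show "degree W < card (a ` {..<n})" using card degW by simp
      have "degree (\<Sum>i<n. smult (?cc i) (eps n a i)) < n"
      proof (rule degree_sum_less[OF _ n0])
        fix i assume "i \<in> {..<n}"
        then show "degree (smult (?cc i) (eps n a i)) < n"
          using degree_smult_le[of "?cc i" "eps n a i"] eps_deg[of i n a] n0 by auto
      qed
      then show "degree (\<Sum>i<n. smult (?cc i) (eps n a i)) < card (a ` {..<n})" using card by simp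
    qed
  qed simp
next
  fix c assume P: "?P c"
  show "c = ?cc"
  proof
    fix j show "c j = ?cc j"
    proof (cases "j < n")
      case True
      have "poly W (a j) = c j * poly (eps n a j) (a j)"
        using P True by (metis eps_sum_eval)
      then show ?thesis using True eps_self[OF inj True] by simp
    qed (use P in simp)
  qed
qed

lemma deg_pull: "e > 0 \<Longrightarrow> degree (map_poly (pull e) p) = degree p"
  by (rule degree_map_poly) (simp add: pull_eq0)

lemma low1_pull: "c $ 0 = 0 \<Longrightarrow> low 1 (pull e c)"
  unfolding low_def pull_nth by auto

lemma core:
  fixes f :: "complex fps poly" and n e :: nat and a :: "nat \<Rightarrow> complex fls"
  assumes n2: "n \<ge> 2"
    and e_pos: "e > 0"
    and f_monic: "lead_coeff f = 1" and f_deg: "degree f = n"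
    and f_dist: "\<forall>k<n. coeff f k $ 0 = 0"
    and a_distinct: "inj_on a {..<n}"
    and f_fact: "map_poly (pull e) f = (\<Prod>i<n. [:- a i, 1:])"
  obtains D where "delta e n a = ereal D" "D > 0"
    and "\<And>i. i < n \<Longrightarrow> a i \<noteq> 0 \<Longrightarrow> D \<le> real_of_int (fls_subdegree (a i)) / real e"
proof -
  define F where "F = map_poly (pull e) f"
  have coeffF: "coeff F k = pull e (coeff f k)" for k
    unfolding F_def by (simp add: coeff_map_poly)
  have degF: "degree F \<le> n" unfolding F_def using f_deg deg_pull[OF e_pos] by simp
  have cn: "coeff F n = 1" using coeffF f_monic f_deg e_pos by simp
  have lowc: "\<forall>k<n. low 1 (coeff F k)" using f_dist coeffF low1_pull by simp
  have root: "poly F (a i) = 0" if "i < n" for i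
    unfolding F_def f_fact poly_prod using that by (intro prod_zero) auto
  have apos: "fls_subdegree (a i) > 0" if "i < n" "a i \<noteq> 0" for i
    using root_pos[OF degF cn lowc root[OF that(1)] that(2)] .
  have fin: "finite ((\<lambda>i. nu e (a i)) ` {..<n})" and ne: "(\<lambda>i. nu e (a i)) ` {..<n} \<noteq> {}"
    using n2 by (auto simp: lessThan_empty_iff)
  obtain j where j: "j < n" "a j \<noteq> 0"
  proof (cases "a 0 = 0")
    case True
    then have "a 1 \<noteq> 0" using a_distinct n2 unfolding inj_on_def
      by (metis lessThan_iff less_le_trans one_less_numeral_iff semiring_norm(76) zero_less_numeral zero_neq_one)
    moreover have "1 < n" using n2 by simp
    ultimately show ?thesis using that by blast
  next
    case False
    moreover have "0 < n" using n2 by simp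
    ultimately show ?thesis using that by blast
  qed
  have "delta e n a \<le> nu e (a j)" unfolding delta_def using fin j by (intro Min_le) auto
  then have dfin: "delta e n a < \<infinity>" using j unfolding nu_def by auto
  have "\<forall>i<n. 0 < nu e (a i)" using apos e_pos unfolding nu_def by auto
  then have dpos: "delta e n a > 0" unfolding delta_def using Min_gr_iff[OF fin ne] by auto
  define D where "D = real_of_ereal (delta e n a)"
  have dD: "delta e n a = ereal D" using dfin dpos unfolding D_def
    by (cases "delta e n a") auto
  show ?thesis
  proof (rule that[OF dD])
    show "D > 0" using dpos dD by simp
    fix i assume i: "i < n" "a i \<noteq> 0"
    have "delta e n a \<le> nu e (a i)" unfolding delta_def using fin i by (intro Min_le) auto
    then show "D \<le> real_of_int (fls_subdegree (a i)) / real e" using i dD unfolding nu_def by simp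
  qed
qed

lemma bound:
  fixes w :: "complex fps poly" and a :: "nat \<Rightarrow> complex fls" and D :: real
  assumes e_pos: "e > 0" and D_pos: "D > 0" and i: "i < n"
    and aD: "\<And>j. j < n \<Longrightarrow> a j \<noteq> 0 \<Longrightarrow> D \<le> real_of_int (fls_subdegree (a j)) / real e"
    and degw: "degree w < n"
    and Ei: "poly (eps n a i) (a i) \<noteq> 0"
    and cnz: "poly (map_poly (pull e) w) (a i) / poly (eps n a i) (a i) \<noteq> 0"
  shows "\<exists>R. rho n D w = ereal R \<and>
     real n * D * R - real_of_int (fls_subdegree (poly (eps n a i) (a i))) / real e
       \<le> real_of_int (fls_subdegree (poly (map_poly (pull e) w) (a i) / poly (eps n a i) (a i))) / real e"
proof -
  define W where "W = map_poly (pull e) w"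
  define Wa where "Wa = poly W (a i)"
  define Ea where "Ea = poly (eps n a i) (a i)"
  have Wa: "Wa \<noteq> 0" using cnz unfolding Wa_def W_def by auto
  have n0: "n > 0" using i by simp
  have "w \<noteq> 0" using Wa unfolding Wa_def W_def by auto
  then obtain l0 where l0: "coeff w l0 \<noteq> 0" by (metis leading_coeff_0_iff)
  define k0 where "k0 = subdegree (coeff w l0)"
  have k0: "coeff w l0 $ k0 \<noteq> 0" using l0 unfolding k0_def by simp
  define S where "S = {ereal (real k / (real n * D) + real l / real n) | k l. coeff w l $ k \<noteq> 0}"
  have rho: "rho n D w = Inf S" unfolding rho_def S_def by simp
  have "Inf S \<le> ereal (real k0 / (real n * D) + real l0 / real n)"
    unfolding S_def using k0 by (intro Inf_lower) blast
  moreover have "Inf S \<ge> 0"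
    unfolding S_def using D_pos by (intro Inf_greatest) auto
  ultimately obtain R where R: "Inf S = ereal R" by (cases "Inf S") auto
  have Rle: "real n * D * R \<le> real k + real l * D" if "coeff w l $ k \<noteq> 0" for k l
  proof -
    have "ereal R \<le> ereal (real k / (real n * D) + real l / real n)"
      unfolding R[symmetric] S_def using that by (intro Inf_lower) blast
    then have "R \<le> real k / (real n * D) + real l / real n" by simp
    then have "real n * D * R \<le> real n * D * (real k / (real n * D) + real l / real n)"
      using n0 D_pos by (intro mult_left_mono) auto
    also have "\<dots> = real k + real l * D" using n0 D_pos by (simp add: field_simps)
    finally show ?thesis .
  qed
  have degW: "degree W \<le> n" unfolding W_def using deg_pull[OF e_pos] degw by simp
  have "Wa = (\<Sum>l\<le>n. coeff W l * a i ^ l)" unfolding Wa_def by (rule poly_sum_le[OF degW])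
  also have "\<dots> = (\<Sum>l\<le>n. pull e (coeff w l) * a i ^ l)"
    unfolding W_def by (simp add: coeff_map_poly)
  finally have Wsum: "Wa = (\<Sum>l\<le>n. pull e (coeff w l) * a i ^ l)" .
  define B where "B = real e * real n * D * R"
  have "low (ceiling B) Wa" unfolding Wsum
  proof (rule low_sum, rule low_subdeg)
    fix l assume "l \<in> {..n}"
    show "pull e (coeff w l) * a i ^ l = 0 \<or> ceiling B \<le> fls_subdegree (pull e (coeff w l) * a i ^ l)"
    proof (cases "pull e (coeff w l) * a i ^ l = 0")
      case False
      then have cl: "coeff w l \<noteq> 0" and ail: "a i ^ l \<noteq> 0" by auto
      define k where "k = subdegree (coeff w l)"
      have ck: "coeff w l $ k \<noteq> 0" using cl unfolding k_def by simp
      have sd: "fls_subdegree (pull e (coeff w l) * a i ^ l) = int e * int k + int l * fls_subdegree (a i)"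
        using cl ail e_pos by (simp add: pull_eq0 pull_subdeg fls_subdegree_pow k_def)
      have al: "real l * (real e * D) \<le> real l * real_of_int (fls_subdegree (a i))"
      proof (cases "l = 0")
        case False
        then have "a i \<noteq> 0" using ail by auto
        then have "D \<le> real_of_int (fls_subdegree (a i)) / real e" using aD i by blast
        then have "real e * D \<le> real_of_int (fls_subdegree (a i))" using e_pos by (simp add: field_simps)
        then show ?thesis by (intro mult_left_mono) auto
      qed simp
      have "B = real e * (real n * D * R)" unfolding B_def by simp
      also have "\<dots> \<le> real e * (real k + real l * D)" using Rle[OF ck] by (intro mult_left_mono) auto
      also have "\<dots> = real e * real k + real l * (real e * D)" by (simp add: algebra_simps)
      also have "\<dots> \<le> real e * real k + real l * real_of_int (fls_subdegree (a i))" using al by simp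
      also have "\<dots> = real_of_int (fls_subdegree (pull e (coeff w l) * a i ^ l))" unfolding sd by simp
      finally show ?thesis by (simp add: ceiling_le_iff)
    qed simp
  qed
  then have "ceiling B \<le> fls_subdegree Wa" using Wa by (rule low_subdeg_ge)
  then have Bsd: "B \<le> real_of_int (fls_subdegree Wa)" by (simp add: ceiling_le_iff)
  have Ea: "Ea \<noteq> 0" using Ei unfolding Ea_def .
  have "fls_subdegree (Wa / Ea) = fls_subdegree Wa - fls_subdegree Ea"
    using Wa Ea by (rule fls_divide_subdegree)
  then have "real_of_int (fls_subdegree (Wa / Ea)) / real e
      = real_of_int (fls_subdegree Wa) / real e - real_of_int (fls_subdegree Ea) / real e"
    by (simp add: diff_divide_distrib)
  moreover have "real n * D * R \<le> real_of_int (fls_subdegree Wa) / real e"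
    using Bsd e_pos unfolding B_def by (simp add: field_simps)
  ultimately have "real n * D * R - real_of_int (fls_subdegree Ea) / real e
      \<le> real_of_int (fls_subdegree (Wa / Ea)) / real e" by linarith
  moreover have "rho n D w = ereal R" using rho R by simp
  ultimately show ?thesis unfolding Wa_def W_def Ea_def by blast
qed

theorem mainTheorem17:
  fixes f :: "complex fps poly" and n e :: nat and a :: "nat \<Rightarrow> complex fls"
  assumes n2: "n \<ge> 2"
    and e_pos: "e > 0"
    and f_conv: "\<forall>k. conv_fps (coeff f k)"
    and f_monic: "lead_coeff f = 1" and f_deg: "degree f = n"
    and f_dist: "\<forall>k<n. coeff f k $ 0 = 0"
    and a_distinct: "inj_on a {..<n}"
    and f_fact: "map_poly (pull e) f = (\<Prod>i<n. [:- a i, 1:])"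
    and sum0: "(\<Sum>i<n. a i) = 0"
  shows "(\<forall>w. degree w < n \<and> (\<forall>l. conv_fps (coeff w l)) \<longrightarrow>
            val_E e n a w \<ge> ereal (real n) * delta e n a * rho n (real_of_ereal (delta e n a)) w
                              - Max (mm e n a ` {..<n}))
       \<and> (\<forall>q. ereal q \<ge> Max (mm e n a ` {..<n}) / (ereal (real n) * delta e n a) \<longrightarrow>
            (\<forall>w. degree w < n \<and> (\<forall>l. conv_fps (coeff w l)) \<and>
                 rho n (real_of_ereal (delta e n a)) w \<ge> ereal q \<longrightarrow> val_E e n a w \<ge> 0))"
proof -
  obtain D where dD: "delta e n a = ereal D" and D_pos: "D > 0"
    and aD: "\<And>i. i < n \<Longrightarrow> a i \<noteq> 0 \<Longrightarrow> D \<le> real_of_int (fls_subdegree (a i)) / real e"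
    using core[OF n2 e_pos f_monic f_deg f_dist a_distinct f_fact] by blast
  have rD: "real_of_ereal (delta e n a) = D" using dD by simp
  define E where "E i = poly (eps n a i) (a i)" for i
  define mr where "mr i = real_of_int (fls_subdegree (E i)) / real e" for i
  have Enz: "E i \<noteq> 0" if "i < n" for i unfolding E_def using eps_self[OF a_distinct that] .
  have mm: "mm e n a i = ereal (mr i)" if i: "i < n" for i
  proof -
    have nz: "a i - a j \<noteq> 0" if "j \<in> {..<n} - {i}" for j
      using that i a_distinct unfolding inj_on_def by auto
    have "mm e n a i = (\<Sum>j\<in>{..<n} - {i}. ereal (real_of_int (fls_subdegree (a i - a j)) / real e))"
      unfolding mm_def nu_def using nz by (intro sum.cong) auto
    also have "\<dots> = ereal (\<Sum>j\<in>{..<n} - {i}. real_of_int (fls_subdegree (a i - a j)) / real e)"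
      by simp
    also have "(\<Sum>j\<in>{..<n} - {i}. real_of_int (fls_subdegree (a i - a j)) / real e) = mr i"
    proof -
      have "fls_subdegree (E i) = (\<Sum>j\<in>{..<n} - {i}. fls_subdegree (a i - a j))"
        unfolding E_def eps_eval using nz by (intro fls_subdegree_prod) auto
      then show ?thesis unfolding mr_def by (simp add: sum_divide_distrib)
    qed
    finally show ?thesis .
  qed
  have fin: "finite (mm e n a ` {..<n})" and ne: "mm e n a ` {..<n} \<noteq> {}"
    using n2 by (auto simp: lessThan_empty_iff)
  obtain i0 where i0: "i0 < n" "Max (mm e n a ` {..<n}) = mm e n a i0"
    using Max_in[OF fin ne] by auto
  define M where "M = mr i0"
  have MM: "Max (mm e n a ` {..<n}) = ereal M" using i0 mm unfolding M_def by simp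
  have mrM: "mr i \<le> M" if "i < n" for i
  proof -
    have "mm e n a i \<le> Max (mm e n a ` {..<n})" using fin that by (intro Max_ge) auto
    then show ?thesis using mm[OF that] MM by simp
  qed
  define cc where "cc w i = poly (map_poly (pull e) w) (a i) / E i" for w i
  have valE: "val_E e n a w = Min ((\<lambda>i. nu e (cc w i)) ` {..<n})" if "degree w < n" for w
  proof -
    have dW: "degree (map_poly (pull e) w) < n" using deg_pull[OF e_pos] that by simp
    show ?thesis unfolding val_E_def Let_def interp[OF a_distinct dW] cc_def E_def
      by (intro arg_cong[where f = Min] image_cong) auto
  qed
  have key: "cc w i = 0 \<or> (\<exists>R. rho n D w = ereal R \<and> real n * D * R - M \<le> real_of_int (fls_subdegree (cc w i)) / real e)"
    if "degree w < n" "i < n" for w i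
  proof (cases "cc w i = 0")
    case False
    from bound[OF e_pos D_pos that(2) aD that(1) Enz[OF that(2), unfolded E_def] False[unfolded cc_def E_def]]
    obtain R where "rho n D w = ereal R"
      "real n * D * R - mr i \<le> real_of_int (fls_subdegree (cc w i)) / real e"
      unfolding mr_def cc_def E_def by blast
    then show ?thesis using mrM[OF that(2)] by force
  qed simp
  have finI: "finite ((\<lambda>i. nu e (cc w i)) ` {..<n})" "(\<lambda>i. nu e (cc w i)) ` {..<n} \<noteq> {}" for w
    using n2 by (auto simp: lessThan_empty_iff)
  show ?thesis
  proof (intro conjI allI impI)
    fix w :: "complex fps poly" assume w: "degree w < n \<and> (\<forall>l. conv_fps (coeff w l))"
    show "val_E e n a w \<ge> ereal (real n) * delta e n a * rho n (real_of_ereal (delta e n a)) w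
                              - Max (mm e n a ` {..<n})"
    proof -
      have "ereal (real n) * ereal D * rho n D w - ereal M \<le> nu e (cc w i)" if i: "i < n" for i
        using key[OF conjunct1[OF w] i]
      proof
        assume "cc w i = 0" then show ?thesis unfolding nu_def by simp
      next
        assume "\<exists>R. rho n D w = ereal R \<and> real n * D * R - M \<le> real_of_int (fls_subdegree (cc w i)) / real e"
        then obtain R where "rho n D w = ereal R" "real n * D * R - M \<le> real_of_int (fls_subdegree (cc w i)) / real e"
          by blast
        then show ?thesis unfolding nu_def by auto
      qed
      then show ?thesis
        unfolding valE[OF conjunct1[OF w]] rD dD MM Min_ge_iff[OF finI] by auto
    qed
  next
    fix q :: real and w :: "complex fps poly"
    assume q: "ereal q \<ge> Max (mm e n a ` {..<n}) / (ereal (real n) * delta e n a)"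
    assume w: "degree w < n \<and> (\<forall>l. conv_fps (coeff w l)) \<and> rho n (real_of_ereal (delta e n a)) w \<ge> ereal q"
    have n0: "real n > 0" using n2 by simp
    have "ereal (real n) * delta e n a = ereal (real n * D)" using dD by simp
    then have "Max (mm e n a ` {..<n}) / (ereal (real n) * delta e n a) = ereal (M / (real n * D))"
      using MM n0 D_pos by simp
    then have "M / (real n * D) \<le> q" using q by simp
    then have Mq: "M \<le> real n * D * q" using n0 D_pos by (simp add: field_simps)
    have rq: "rho n D w \<ge> ereal q" using w rD by simp
    show "val_E e n a w \<ge> 0"
    proof -
      have "0 \<le> nu e (cc w i)" if i: "i < n" for i
        using key[OF conjunct1[OF w] i]
      proof
        assume "cc w i = 0" then show ?thesis unfolding nu_def by simp
      next
        assume "\<exists>R. rho n D w = ereal R \<and> real n * D * R - M \<le> real_of_int (fls_subdegree (cc w i)) / real e"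
        then obtain R where R: "rho n D w = ereal R" and b: "real n * D * R - M \<le> real_of_int (fls_subdegree (cc w i)) / real e"
          by blast
        have "q \<le> R" using rq R by simp
        then have "real n * D * q \<le> real n * D * R" using n0 D_pos by (intro mult_left_mono) auto
        then have "0 \<le> real_of_int (fls_subdegree (cc w i)) / real e" using b Mq by linarith
        then show ?thesis unfolding nu_def by auto
      qed
      then show ?thesis
        unfolding valE[OF conjunct1[OF w]] Min_ge_iff[OF finI] by auto
    qed
  qed
qed

end
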